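(* In the setting below, assume $$15.2\sqrt{\frac{\mathbb E\|X-\mu\|^4-(\mathrm{tr}(\Sigma))^2}{(\mathrm{tr}(\Sigma))^2}}\le\Big(\frac12-178\frac{\log(1.4/\delta)}{n}\Big)\sqrt{\frac{n}{\log(1.4/\delta)}}.$$ Then $\Pr\big(\mathrm{tr}(\Sigma)\le 2\hat T\big)\ge1-\delta$.
   Context: Let $\mathbb H$ be a separable Hilbert space. Let $X_1,\ldots,X_n\in\mathbb H$ be i.i.d. copies of $X$ with mean $\mu$, covariance operator $\Sigma$, $0<\mathrm{tr}(\Sigma)=\mathbb E\|X-\mu\|^2$, and $\mathbb E\|X-\mu\|^4<\infty$. Let $\alpha_\ast=7/18$ and $p_\ast=0.1$. For $0<p<a<\tfrac12$, $\psi(a;p)=(1-a)\log\frac{1-a}{1-p}+a\log\frac ap$. Given $\delta\in(0,1)$, set $k=\lfloor\log(1/\delta)/\psi(\alpha_\ast;p_\ast)\rfloor+1$, and assume $k\le n/2$. Split $\{1,\ldots,n\}$ into disjoint groups $G_1,\ldots,G_k$ of size $\lfloor n/k\rfloor$. Define: - $\hat\mu_j=\frac1{|G_j|}\sum_{i\in G_j}X_i$; - $\hat T_j=\frac1{|G_j|}\sum_{i\in G_j}\|X_i-\hat\mu_j\|^2$; - $\hat T$ a median of the real numbers $\hat T_1,\ldots,\hat T_k$, i.e. any minimizer over $y\in\mathbb R$ of $\sum_j|y-\hat T_j|$ (arbitrary representative if $k$ is even). *)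

theory Defs
  imports "HOL-Probability.Probability"
begin

text \<open>Kullback-Leibler type function psi(a;p) for Bernoulli distributions.\<close>
definition psi :: "real \<Rightarrow> real \<Rightarrow> real" where
  "psi a p = (1 - a) * ln ((1 - a) / (1 - p)) + a * ln (a / p)"

definition n_blocks :: "real \<Rightarrow> nat" where
  "n_blocks \<delta> = nat \<lfloor>ln (1 / \<delta>) / psi (7/18) (1/10)\<rfloor> + 1"

definition grp_mean :: "(nat \<Rightarrow> 'a \<Rightarrow> 'h::real_normed_vector) \<Rightarrow> nat set \<Rightarrow> 'a \<Rightarrow> 'h" where
  "grp_mean Xs G \<omega> = (1 / real (card G)) *\<^sub>R (\<Sum>i\<in>G. Xs i \<omega>)"

definition grp_T :: "(nat \<Rightarrow> 'a \<Rightarrow> 'h::real_normed_vector) \<Rightarrow> nat set \<Rightarrow> 'a \<Rightarrow> real" where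
  "grp_T Xs G \<omega> = (1 / real (card G)) * (\<Sum>i\<in>G. (norm (Xs i \<omega> - grp_mean Xs G \<omega>))\<^sup>2)"

end

theory Submission
  imports Defs
begin


lemma (in prob_space) indep_inner_zero:
  fixes U V :: "'a \<Rightarrow> 'h::{real_inner, second_countable_topology}"
  assumes ind: "indep_var borel U borel V"
    and iUV: "integrable M (\<lambda>\<omega>. (U \<omega> - c) \<bullet> (V \<omega> - c))"
    and V0: "\<And>a. (\<integral>\<omega>. a \<bullet> (V \<omega> - c) \<partial>M) = 0"
  shows "(\<integral>\<omega>. (U \<omega> - c) \<bullet> (V \<omega> - c) \<partial>M) = 0"
proof -
  have rv: "random_variable borel U" "random_variable borel V"
    using ind indep_var_distribution_eq by blast+
  interpret P1: prob_space "distr M borel U" by (rule prob_space_distr) (rule rv(1))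
  interpret P2: prob_space "distr M borel V" by (rule prob_space_distr) (rule rv(2))
  interpret P12: pair_sigma_finite "distr M borel U" "distr M borel V" ..
  have eq: "distr M borel U \<Otimes>\<^sub>M distr M borel V = distr M (borel \<Otimes>\<^sub>M borel) (\<lambda>x. (U x, V x))"
    using ind indep_var_distribution_eq by blast
  have meas: "(\<lambda>(a::'h, b). (a - c) \<bullet> (b - c)) \<in> borel_measurable (borel \<Otimes>\<^sub>M borel)"
    by measurable
  have pm: "(\<lambda>x. (U x, V x)) \<in> measurable M (borel \<Otimes>\<^sub>M borel)"
    using rv by measurable
  have "(\<integral>\<omega>. (U \<omega> - c) \<bullet> (V \<omega> - c) \<partial>M) = integral\<^sup>L (distr M (borel \<Otimes>\<^sub>M borel) (\<lambda>x. (U x, V x))) (\<lambda>(a, b). (a - c) \<bullet> (b - c))"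
    by (subst integral_distr[OF pm meas]) simp
  also have "\<dots> = integral\<^sup>L (distr M borel U \<Otimes>\<^sub>M distr M borel V) (\<lambda>(a, b). (a - c) \<bullet> (b - c))"
    using eq by simp
  also have "\<dots> = (\<integral>a. (\<integral>b. (a - c) \<bullet> (b - c) \<partial>distr M borel V) \<partial>distr M borel U)"
  proof (rule P12.integral_fst[symmetric])
    show "integrable (distr M borel U \<Otimes>\<^sub>M distr M borel V) (\<lambda>(a, b). (a - c) \<bullet> (b - c))"
      unfolding eq using iUV pm meas by (subst integrable_distr_eq) auto
  qed
  also have "\<dots> = (\<integral>a. 0 \<partial>distr M borel U)"
  proof -
    have "(\<integral>b. (a - c) \<bullet> (b - c) \<partial>distr M borel V) = 0" for a
    proof -
      have "(\<integral>b. (a - c) \<bullet> (b - c) \<partial>distr M borel V) = (\<integral>\<omega>. (a - c) \<bullet> (V \<omega> - c) \<partial>M)"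
        using rv(2) by (subst integral_distr) auto
      then show ?thesis using V0 by simp
    qed
    then show ?thesis by simp
  qed
  finally show ?thesis by simp
qed



lemma psi_val: "18 * psi (7/18) (1/10) = ln ((55/81)^11 * (35/9)^7)"
proof -
  have "psi (7/18) (1/10) = (11/18) * ln (55/81) + (7/18) * ln (35/9)"
    unfolding psi_def by (simp add: field_simps)
  moreover have "ln ((55/81::real)^11 * (35/9)^7) = 11 * ln (55/81) + 7 * ln (35/9)"
    by (simp add: ln_mult ln_realpow)
  ultimately show ?thesis by simp
qed

lemma psi_bounds:
  shows "psi (7/18) (1/10) \<le> ln (7/5)" and "2 * psi (7/18) (1/10) \<le> ln 2"
    and "psi (7/18) (1/10) \<ge> 1/4"
proof -
  let ?R = "(55/81::real)^11 * (35/9)^7"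
  have R: "?R > 0" by simp
  have "18 * ln (7/5::real) = ln ((7/5)^18)" by (simp add: ln_realpow)
  moreover have "ln ?R \<le> ln ((7/5::real)^18)" by (subst ln_le_cancel_iff) (simp_all add: power_divide)
  ultimately show "psi (7/18) (1/10) \<le> ln (7/5)" using psi_val by linarith
  have "9 * ln (2::real) = ln (2^9)" by (simp only: ln_realpow[of 2 9])
  moreover have "ln ?R \<le> ln ((2::real)^9)" by (subst ln_le_cancel_iff) (simp_all add: power_divide)
  ultimately show "2 * psi (7/18) (1/10) \<le> ln 2" using psi_val by linarith
  have "18 * ln (4/3::real) = ln ((4/3)^18)" by (simp add: ln_realpow)
  moreover have "ln ((4/3::real)^18) \<le> ln ?R" by (subst ln_le_cancel_iff) (simp_all add: power_divide)
  moreover have "ln (4/3::real) \<ge> 1/4"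
  proof -
    have "ln (3/4::real) \<le> 3/4 - 1" by (rule ln_le_minus_one) simp
    moreover have "ln (3/4::real) = - ln (4/3)" by (simp add: ln_div)
    ultimately show ?thesis by simp
  qed
  ultimately show "psi (7/18) (1/10) \<ge> 1/4" using psi_val by linarith
qed



lemma div_lower: "k > 0 \<Longrightarrow> real n / real k - 1 \<le> real (n div k)"
proof -
  assume k: "k > 0"
  have "n = k * (n div k) + n mod k" by simp
  hence "real n = real k * real (n div k) + real (n mod k)" by (metis of_nat_add of_nat_mult)
  moreover have "real (n mod k) < real k" using k by simp
  ultimately have "real n < real k * (real (n div k) + 1)" by (simp add: algebra_simps)
  thus ?thesis using k by (simp add: field_simps)
qed

lemma num_bound:
  fixes n :: nat and \<delta> \<kappa> :: real
  assumes \<delta>: "0 < \<delta>" "\<delta> < 1" and \<kappa>: "0 \<le> \<kappa>"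
    and k_le: "real (n_blocks \<delta>) \<le> real n / 2"
    and cond: "15.2 * sqrt \<kappa> \<le> (1/2 - 178 * ln (1.4/\<delta>) / real n) * sqrt (real n / ln (1.4/\<delta>))"
  shows "\<kappa> / (9/100 * real (n div n_blocks \<delta>)) + 5 / real (n div n_blocks \<delta>) \<le> 1/8"
proof -
  define \<psi> where "\<psi> = psi (7/18) (1/10)"
  define L where "L = ln (1.4/\<delta>)"
  define k where "k = n_blocks \<delta>"
  define m where "m = n div k"
  have \<psi>b: "\<psi> \<le> ln (7/5)" "\<psi> \<ge> 1/4" using psi_bounds unfolding \<psi>_def by auto
  have k1: "k \<ge> 1" unfolding k_def n_blocks_def by simp
  have n2: "real n \<ge> 2" using k_le k1 unfolding k_def[symmetric] by linarith
  have L_eq: "L = ln (7/5) + ln (1/\<delta>)"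
    unfolding L_def using \<delta> by (simp add: ln_div ln_mult)
  have lnd: "ln (1/\<delta>) \<ge> 0" using \<delta> by simp
  have Lpos: "L > 0" using L_eq lnd \<psi>b by linarith
  have "real k \<le> ln (1/\<delta>) / \<psi> + 1"
  proof -
    have "real (nat \<lfloor>ln (1/\<delta>) / \<psi>\<rfloor>) \<le> ln (1/\<delta>) / \<psi>"
      using lnd \<psi>b by (simp add: of_nat_nat)
    thus ?thesis unfolding k_def n_blocks_def \<psi>_def[symmetric] by simp
  qed
  also have "\<dots> = (ln (1/\<delta>) + \<psi>) / \<psi>" using \<psi>b by (simp add: field_simps)
  also have "\<dots> \<le> L / \<psi>" using L_eq \<psi>b by (intro divide_right_mono) auto
  finally have kL: "real k * \<psi> \<le> L" using \<psi>b by (simp add: field_simps)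
  define r where "r = real n / L"
  have rpos: "r > 0" unfolding r_def using n2 Lpos by simp
  have "real m \<ge> real n / real k - 1" unfolding m_def using k1 by (intro div_lower) simp
  moreover have "real n / real k \<ge> r / 4"
  proof -
    have "real k * (1/4) \<le> real k * \<psi>" using \<psi>b by (intro mult_left_mono) auto
    hence k4: "real k \<le> 4 * L" using kL by linarith
    have "real n / (4 * L) \<le> real n / real k"
      using k4 k1 n2 by (intro divide_left_mono) auto
    thus ?thesis unfolding r_def using Lpos k1 by (simp add: field_simps)
  qed
  ultimately have mr: "real m \<ge> r / 4 - 1" by linarith
  define a where "a = 1/2 - 178 / r"
  have a_eq: "1/2 - 178 * ln (1.4/\<delta>) / real n = a" unfolding a_def r_def L_def using n2 Lpos by (simp add: field_simps)
  have cond': "15.2 * sqrt \<kappa> \<le> a * sqrt r" using cond unfolding a_eq r_def L_def .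
  have sr: "sqrt r > 0" using rpos by simp
  have a0: "a \<ge> 0"
  proof (rule ccontr)
    assume "\<not> a \<ge> 0"
    hence "a * sqrt r < 0" using sr by (simp add: mult_neg_pos)
    moreover have "15.2 * sqrt \<kappa> \<ge> 0" using \<kappa> by simp
    ultimately show False using cond' by linarith
  qed
  have r356: "r \<ge> 356" using a0 rpos unfolding a_def by (simp add: field_simps)
  have "(15.2 * sqrt \<kappa>)^2 \<le> (a * sqrt r)^2"
    using cond' \<kappa> by (intro power_mono) auto
  hence "231.04 * \<kappa> \<le> a^2 * r" using \<kappa> rpos by (simp add: power_mult_distrib power_divide)
  moreover have "a^2 \<le> 1/4"
  proof -
    have "a \<le> 1/2" unfolding a_def using rpos by simp
    hence "a^2 \<le> (1/2)^2" using a0 by (intro power_mono) auto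
    thus ?thesis by (simp add: power_divide)
  qed
  moreover have "a^2 * r \<le> (1/4) * r" using calculation(2) rpos by (intro mult_right_mono) auto
  ultimately have "231.04 * \<kappa> \<le> r / 4" by linarith
  hence k231: "231 * \<kappa> \<le> r / 4" using \<kappa> by simp
  hence key: "\<kappa> / (9/100) + 5 \<le> real m / 8" using mr r356 by (simp add: field_simps)
  have mpos: "real m > 0" using mr r356 by linarith
  have "\<kappa> / (9/100 * real m) + 5 / real m = (\<kappa> / (9/100) + 5) / real m"
    using mpos by (simp add: field_simps)
  also have "\<dots> \<le> (real m / 8) / real m" using key mpos by (intro divide_right_mono) auto
  also have "\<dots> = 1/8" using mpos by simp
  finally show ?thesis unfolding m_def k_def .
qed



lemma median_count:
  fixes t :: "nat \<Rightarrow> real" and k :: nat and y :: real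
  assumes min: "\<And>z. (\<Sum>j<k. \<bar>y - t j\<bar>) \<le> (\<Sum>j<k. \<bar>z - t j\<bar>)"
  shows "k \<le> 2 * card {j. j < k \<and> t j \<le> y}"
proof (rule ccontr)
  define A where "A = {j. j < k \<and> t j \<le> y}"
  define B where "B = {j. j < k \<and> y < t j}"
  assume "\<not> k \<le> 2 * card {j. j < k \<and> t j \<le> y}"
  hence lt: "2 * card A < k" unfolding A_def by simp
  have fin: "finite A" "finite B" unfolding A_def B_def by auto
  have un: "{..<k} = A \<union> B" "A \<inter> B = {}" unfolding A_def B_def by auto
  have cardk: "card A + card B = k"
    using card_Un_disjoint[OF fin un(2)] un(1) by (metis card_lessThan)
  hence ABlt: "card A < card B" using lt by simp
  hence Bne: "B \<noteq> {}" by auto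
  define \<epsilon> where "\<epsilon> = Min ((\<lambda>j. t j - y) ` B)"
  have \<epsilon>pos: "\<epsilon> > 0" unfolding \<epsilon>_def using fin Bne by (subst Min_gr_iff) (auto simp: B_def)
  have \<epsilon>le: "\<epsilon> \<le> t j - y" if "j \<in> B" for j unfolding \<epsilon>_def using fin that by (intro Min_le) auto
  define z where "z = y + \<epsilon>"
  have "(\<Sum>j<k. \<bar>z - t j\<bar>) = (\<Sum>j\<in>A. \<bar>z - t j\<bar>) + (\<Sum>j\<in>B. \<bar>z - t j\<bar>)"
    using un fin by (simp add: sum.union_disjoint)
  also have "(\<Sum>j\<in>A. \<bar>z - t j\<bar>) = (\<Sum>j\<in>A. \<bar>y - t j\<bar> + \<epsilon>)"
    using \<epsilon>pos by (intro sum.cong) (auto simp: A_def z_def)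
  also have "(\<Sum>j\<in>B. \<bar>z - t j\<bar>) = (\<Sum>j\<in>B. \<bar>y - t j\<bar> - \<epsilon>)"
  proof (rule sum.cong[OF refl])
    fix j assume j: "j \<in> B"
    have "y < t j" using j by (simp add: B_def)
    thus "\<bar>z - t j\<bar> = \<bar>y - t j\<bar> - \<epsilon>" using \<epsilon>le[OF j] unfolding z_def by simp
  qed
  also have "(\<Sum>j\<in>A. \<bar>y - t j\<bar> + \<epsilon>) + (\<Sum>j\<in>B. \<bar>y - t j\<bar> - \<epsilon>)
      = ((\<Sum>j\<in>A. \<bar>y - t j\<bar>) + (\<Sum>j\<in>B. \<bar>y - t j\<bar>)) + \<epsilon> * (real (card A) - real (card B))"
    by (simp add: sum.distrib sum_subtractf algebra_simps)
  also have "(\<Sum>j\<in>A. \<bar>y - t j\<bar>) + (\<Sum>j\<in>B. \<bar>y - t j\<bar>) = (\<Sum>j<k. \<bar>y - t j\<bar>)"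
    using un fin by (simp add: sum.union_disjoint)
  finally have "(\<Sum>j<k. \<bar>z - t j\<bar>) = (\<Sum>j<k. \<bar>y - t j\<bar>) + \<epsilon> * (real (card A) - real (card B))" .
  moreover have "\<epsilon> * (real (card A) - real (card B)) < 0"
    using \<epsilon>pos ABlt by (simp add: mult_pos_neg)
  ultimately show False using min[of z] by linarith
qed



lemma grp_T_eq:
  fixes Xs :: "nat \<Rightarrow> 'a \<Rightarrow> 'h::real_inner"
  assumes fin: "finite G" and ne: "G \<noteq> {}"
  shows "grp_T Xs G \<omega> = tr + (\<Sum>i\<in>G. (norm (Xs i \<omega> - \<mu>))\<^sup>2 - tr) / real (card G)
          - (norm (\<Sum>i\<in>G. Xs i \<omega> - \<mu>))\<^sup>2 / (real (card G))\<^sup>2"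
proof -
  define m where "m = real (card G)"
  have m: "m > 0" unfolding m_def using fin ne by (simp add: card_gt_0_iff)
  define Sy where "Sy = (\<Sum>i\<in>G. Xs i \<omega> - \<mu>)"
  define b where "b = (1/m) *\<^sub>R Sy"
  have mean: "grp_mean Xs G \<omega> = \<mu> + b"
  proof -
    have "Sy = (\<Sum>i\<in>G. Xs i \<omega>) - m *\<^sub>R \<mu>" unfolding Sy_def m_def by (simp add: sum_subtractf sum_constant_scaleR)
    hence "(\<Sum>i\<in>G. Xs i \<omega>) = Sy + m *\<^sub>R \<mu>" by simp
    hence "grp_mean Xs G \<omega> = (1/m) *\<^sub>R (Sy + m *\<^sub>R \<mu>)" unfolding grp_mean_def m_def by simp
    also have "\<dots> = b + \<mu>" using m unfolding b_def by (simp add: scaleR_add_right)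
    finally show ?thesis by simp
  qed
  have "(\<Sum>i\<in>G. (norm (Xs i \<omega> - grp_mean Xs G \<omega>))\<^sup>2)
      = (\<Sum>i\<in>G. (norm (Xs i \<omega> - \<mu>))\<^sup>2 - 2 * ((Xs i \<omega> - \<mu>) \<bullet> b) + (norm b)\<^sup>2)"
  proof (rule sum.cong[OF refl])
    fix i
    have e: "Xs i \<omega> - grp_mean Xs G \<omega> = (Xs i \<omega> - \<mu>) - b" using mean by simp
    have "(norm (x - y))\<^sup>2 = (norm x)\<^sup>2 - 2 * (x \<bullet> y) + (norm y)\<^sup>2" for x y :: 'h
      by (simp add: power2_norm_eq_inner inner_diff_left inner_diff_right inner_commute)
    then show "(norm (Xs i \<omega> - grp_mean Xs G \<omega>))\<^sup>2 = (norm (Xs i \<omega> - \<mu>))\<^sup>2 - 2 * ((Xs i \<omega> - \<mu>) \<bullet> b) + (norm b)\<^sup>2"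
      unfolding e .
  qed
  also have "\<dots> = (\<Sum>i\<in>G. (norm (Xs i \<omega> - \<mu>))\<^sup>2) - (\<Sum>i\<in>G. 2 * ((Xs i \<omega> - \<mu>) \<bullet> b)) + (\<Sum>i\<in>G. (norm b)\<^sup>2)"
    by (simp add: sum.distrib sum_subtractf)
  also have "(\<Sum>i\<in>G. 2 * ((Xs i \<omega> - \<mu>) \<bullet> b)) = 2 * (Sy \<bullet> b)"
    unfolding Sy_def by (simp add: inner_sum_left sum_distrib_left)
  also have "(\<Sum>i\<in>G. (norm b)\<^sup>2) = m * (norm b)\<^sup>2" unfolding m_def by simp
  also have "Sy \<bullet> b = (norm Sy)\<^sup>2 / m" unfolding b_def by (simp add: power2_norm_eq_inner)
  also have "m * (norm b)\<^sup>2 = (norm Sy)\<^sup>2 / m" unfolding b_def using m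
    by (simp add: power2_eq_square field_simps)
  finally have S: "(\<Sum>i\<in>G. (norm (Xs i \<omega> - grp_mean Xs G \<omega>))\<^sup>2) = (\<Sum>i\<in>G. (norm (Xs i \<omega> - \<mu>))\<^sup>2) - (norm Sy)\<^sup>2 / m"
    by simp
  have "(\<Sum>i\<in>G. (norm (Xs i \<omega> - \<mu>))\<^sup>2 - tr) = (\<Sum>i\<in>G. (norm (Xs i \<omega> - \<mu>))\<^sup>2) - m * tr"
    unfolding m_def by (simp add: sum_subtractf)
  thus ?thesis unfolding grp_T_def S m_def[symmetric] Sy_def[symmetric] using m
    by (simp add: field_simps power2_eq_square)
qed

lemma (in prob_space) group_bound:
  fixes Xs :: "nat \<Rightarrow> 'a \<Rightarrow> 'h::{real_inner, second_countable_topology}"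
    and G :: "nat set" and \<mu> :: 'h and tr Vv c :: real
  assumes fin: "finite G" and ne: "G \<noteq> {}"
    and meas: "\<And>i. i \<in> G \<Longrightarrow> Xs i \<in> borel_measurable M"
    and h1: "\<And>i l. i \<in> G \<Longrightarrow> l \<in> G \<Longrightarrow> integrable M (\<lambda>\<omega>. ((norm (Xs i \<omega> - \<mu>))\<^sup>2 - tr) * ((norm (Xs l \<omega> - \<mu>))\<^sup>2 - tr))"
    and e1: "\<And>i l. i \<in> G \<Longrightarrow> l \<in> G \<Longrightarrow> (\<integral>\<omega>. ((norm (Xs i \<omega> - \<mu>))\<^sup>2 - tr) * ((norm (Xs l \<omega> - \<mu>))\<^sup>2 - tr) \<partial>M) = (if i = l then Vv else 0)"
    and h2: "\<And>i l. i \<in> G \<Longrightarrow> l \<in> G \<Longrightarrow> integrable M (\<lambda>\<omega>. (Xs i \<omega> - \<mu>) \<bullet> (Xs l \<omega> - \<mu>))"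
    and e2: "\<And>i l. i \<in> G \<Longrightarrow> l \<in> G \<Longrightarrow> (\<integral>\<omega>. (Xs i \<omega> - \<mu>) \<bullet> (Xs l \<omega> - \<mu>) \<partial>M) = (if i = l then tr else 0)"
    and tr: "tr > 0" and c: "0 < c" "c < 1/2"
  shows "prob {\<omega> \<in> space M. grp_T Xs G \<omega> < tr/2} \<le> Vv / (real (card G) * c\<^sup>2 * tr\<^sup>2) + 1 / ((1/2 - c) * real (card G))"
proof -
  define m where "m = real (card G)"
  have m: "m > 0" unfolding m_def using fin ne by (simp add: card_gt_0_iff)
  define Z where "Z i \<omega> = (norm (Xs i \<omega> - \<mu>))\<^sup>2 - tr" for i \<omega>
  define Y where "Y i \<omega> = Xs i \<omega> - \<mu>" for i \<omega>
  define Q where "Q \<omega> = (\<Sum>i\<in>G. \<Sum>l\<in>G. Z i \<omega> * Z l \<omega>)" for \<omega>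
  define R where "R \<omega> = (\<Sum>i\<in>G. \<Sum>l\<in>G. Y i \<omega> \<bullet> Y l \<omega>)" for \<omega>
  have Q_eq: "Q \<omega> = (\<Sum>i\<in>G. Z i \<omega>)\<^sup>2" for \<omega>
    unfolding Q_def by (simp add: power2_eq_square sum_product)
  have R_eq: "R \<omega> = (norm (\<Sum>i\<in>G. Y i \<omega>))\<^sup>2" for \<omega>
    unfolding R_def by (simp add: power2_norm_eq_inner inner_sum_left inner_sum_right inner_commute)
  have T_eq: "grp_T Xs G \<omega> = tr + (\<Sum>i\<in>G. Z i \<omega>) / m - R \<omega> / m\<^sup>2" for \<omega>
    unfolding R_eq Z_def Y_def m_def by (rule grp_T_eq[OF fin ne])
  have iQ: "integrable M Q" unfolding Q_def using h1 unfolding Z_def by auto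
  have iR: "integrable M R" unfolding R_def using h2 unfolding Y_def by auto
  have EQ: "integral\<^sup>L M Q = m * Vv"
  proof -
    have "integral\<^sup>L M Q = (\<Sum>i\<in>G. \<Sum>l\<in>G. (if i = l then Vv else 0))"
      unfolding Q_def Z_def using h1 e1 by (simp add: integral_sum)
    also have "\<dots> = m * Vv" unfolding m_def using fin by simp
    finally show ?thesis .
  qed
  have ER: "integral\<^sup>L M R = m * tr"
  proof -
    have "integral\<^sup>L M R = (\<Sum>i\<in>G. \<Sum>l\<in>G. (if i = l then tr else 0))"
      unfolding R_def Y_def using h2 e2 by (simp add: integral_sum)
    also have "\<dots> = m * tr" unfolding m_def using fin by simp
    finally show ?thesis .
  qed
  define g where "g \<omega> = Q \<omega> / (m\<^sup>2 * c\<^sup>2 * tr\<^sup>2) + R \<omega> / (m\<^sup>2 * (1/2 - c) * tr)" for \<omega>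
  have ig: "integrable M g" unfolding g_def using iQ iR by auto
  have Eg: "integral\<^sup>L M g = Vv / (m * c\<^sup>2 * tr\<^sup>2) + 1 / ((1/2 - c) * m)"
    unfolding g_def using iQ iR EQ ER m tr c by (simp add: power2_eq_square field_simps)
  have Tmeas: "(\<lambda>\<omega>. grp_T Xs G \<omega>) \<in> borel_measurable M"
    unfolding grp_T_def grp_mean_def using meas by measurable
  have Fsets: "{\<omega> \<in> space M. grp_T Xs G \<omega> < tr/2} \<in> sets M" using Tmeas by measurable
  have ind_le: "indicator {\<omega> \<in> space M. grp_T Xs G \<omega> < tr/2} \<omega> \<le> g \<omega>" if \<omega>: "\<omega> \<in> space M" for \<omega>
  proof -
    have Qn: "Q \<omega> \<ge> 0" and Rn: "R \<omega> \<ge> 0" using Q_eq R_eq by auto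
    have g1: "0 \<le> Q \<omega> / (m\<^sup>2 * c\<^sup>2 * tr\<^sup>2)" "0 \<le> R \<omega> / (m\<^sup>2 * (1/2 - c) * tr)"
      using Qn Rn c tr by auto
    show ?thesis
    proof (cases "grp_T Xs G \<omega> < tr/2")
      case False thus ?thesis using g1 by (simp add: g_def indicator_def)
    next
      case True
      define s where "s = (\<Sum>i\<in>G. Z i \<omega>) / m"
      have "1 \<le> g \<omega>"
      proof (cases "s < - c * tr")
        case True
        hence "(c * tr)\<^sup>2 \<le> (- s)\<^sup>2" using c tr by (intro power_mono) auto
        hence "(c * tr)\<^sup>2 \<le> s\<^sup>2" by simp
        moreover have "Q \<omega> / (m\<^sup>2 * c\<^sup>2 * tr\<^sup>2) = s\<^sup>2 / (c * tr)\<^sup>2"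
          unfolding s_def Q_eq using m by (simp add: power2_eq_square field_simps)
        moreover have pos: "(c * tr)\<^sup>2 > 0" using c tr by simp
        ultimately have "1 \<le> Q \<omega> / (m\<^sup>2 * c\<^sup>2 * tr\<^sup>2)"
          using le_divide_eq_1_pos[OF pos, of "s\<^sup>2"] by simp
        thus ?thesis using g1 unfolding g_def by linarith
      next
        case False
        have "R \<omega> / m\<^sup>2 > tr/2 - c * tr" using T_eq[of \<omega>] \<open>grp_T Xs G \<omega> < tr/2\<close> False
          unfolding s_def by linarith
        hence "R \<omega> / m\<^sup>2 > (1/2 - c) * tr" by (simp add: algebra_simps)
        hence "1 \<le> R \<omega> / (m\<^sup>2 * (1/2 - c) * tr)" using m c tr by (simp add: field_simps)
        thus ?thesis using g1 unfolding g_def by linarith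
      qed
      thus ?thesis using True \<omega> by (simp add: indicator_def)
    qed
  qed
  have "prob {\<omega> \<in> space M. grp_T Xs G \<omega> < tr/2} = integral\<^sup>L M (indicator {\<omega> \<in> space M. grp_T Xs G \<omega> < tr/2})"
    using Fsets by simp
  also have "\<dots> \<le> integral\<^sup>L M g"
    using Fsets ig ind_le by (intro integral_mono) (auto intro!: integrable_real_indicator simp: emeasure_eq_measure)
  finally show ?thesis using Eg unfolding m_def by simp
qed



lemma final_num:
  fixes k t :: nat and q \<delta> \<psi> :: real
  assumes q: "0 \<le> q" "q \<le> 1/8" and ks: "k \<le> 2 * t" and \<delta>: "0 < \<delta>" "\<delta> < 1"
    and kpsi: "ln (1/\<delta>) < real k * \<psi>" and psi2: "2 * \<psi> \<le> ln 2"
  shows "2^k * q^t \<le> \<delta>"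
proof -
  have e1: "((2::real)^k * q^t)\<^sup>2 = (4::real)^k * q^(2*t)"
  proof -
    have "(2::real)^k * 2^k = 4^k" by (metis power_mult_distrib num_double numeral_times_numeral)
    moreover have "q^t * q^t = q^(2*t)" by (metis power_add mult_2)
    moreover have "(2^k * q^t)\<^sup>2 = ((2::real)^k * 2^k) * (q^t * q^t)" by (simp only: power2_eq_square mult_ac)
    ultimately show ?thesis by (simp only:)
  qed
  have p1: "q \<le> 1" using q by linarith
  have "q^(2*t) \<le> q^k" by (rule power_decreasing[OF ks q(1) p1])
  hence e2: "4^k * q^(2*t) \<le> 4^k * q^k" by (rule mult_left_mono) simp
  have e3: "4^k * q^k = (4*q)^k" by (simp only: power_mult_distrib)
  have e4: "(4*q)^k \<le> (1/2)^k" using q by (intro power_mono) auto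
  have e5: "(1/2::real)^k < \<delta>\<^sup>2"
  proof -
    have "ln ((1/2::real)^k) = - (real k * ln 2)" by (simp add: ln_realpow ln_div)
    also have "\<dots> \<le> - (real k * (2 * \<psi>))" using psi2 by (intro le_imp_neg_le mult_left_mono) auto
    also have "\<dots> < - 2 * ln (1/\<delta>)" using kpsi by simp
    also have "\<dots> = ln (\<delta>\<^sup>2)" using \<delta> by (simp add: ln_realpow ln_div)
    finally show ?thesis using \<delta> by simp
  qed
  have sq: "(2^k * q^t)\<^sup>2 \<le> \<delta>\<^sup>2" using e1 e2 e3 e4 e5 by linarith
  have d0: "0 \<le> \<delta>" using \<delta> by simp
  show ?thesis by (rule power2_le_imp_le[OF sq d0])
qed

theorem mainTheorem8:
  fixes M :: "'a measure"
    and X :: "'a \<Rightarrow> 'h::{real_inner, complete_space, second_countable_topology}"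
    and Xs :: "nat \<Rightarrow> 'a \<Rightarrow> 'h"
    and n :: nat and \<delta> :: real
    and G :: "nat \<Rightarrow> nat set"
    and That :: "'a \<Rightarrow> real"
  assumes P: "prob_space M"
    and X_meas: "X \<in> borel_measurable M"
    and X_int: "integrable M X"
    and X_4: "integrable M (\<lambda>\<omega>. (norm (X \<omega> - integral\<^sup>L M X)) ^ 4)"
    and tr_pos: "0 < integral\<^sup>L M (\<lambda>\<omega>. (norm (X \<omega> - integral\<^sup>L M X))\<^sup>2)"
    and Xs_meas: "\<And>i. i < n \<Longrightarrow> Xs i \<in> borel_measurable M"
    and Xs_distr: "\<And>i. i < n \<Longrightarrow> distr M borel (Xs i) = distr M borel X"
    and Xs_indep: "prob_space.indep_vars M (\<lambda>_. borel) Xs {0..<n}"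
    and \<delta>_pos: "0 < \<delta>" and \<delta>_lt1: "\<delta> < 1"
    and k_le: "real (n_blocks \<delta>) \<le> real n / 2"
    and G_sub: "\<And>j. j < n_blocks \<delta> \<Longrightarrow> G j \<subseteq> {0..<n}"
    and G_card: "\<And>j. j < n_blocks \<delta> \<Longrightarrow> card (G j) = n div n_blocks \<delta>"
    and G_disj: "\<And>j j'. j < n_blocks \<delta> \<Longrightarrow> j' < n_blocks \<delta> \<Longrightarrow> j \<noteq> j' \<Longrightarrow> G j \<inter> G j' = {}"
    and That_meas: "That \<in> borel_measurable M"
    and That_median: "\<And>\<omega> y. \<omega> \<in> space M \<Longrightarrow>
        (\<Sum>j<n_blocks \<delta>. \<bar>That \<omega> - grp_T Xs (G j) \<omega>\<bar>) \<le> (\<Sum>j<n_blocks \<delta>. \<bar>y - grp_T Xs (G j) \<omega>\<bar>)"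
    and cond: "15.2 * sqrt ((integral\<^sup>L M (\<lambda>\<omega>. (norm (X \<omega> - integral\<^sup>L M X)) ^ 4)
                   - (integral\<^sup>L M (\<lambda>\<omega>. (norm (X \<omega> - integral\<^sup>L M X))\<^sup>2))\<^sup>2)
                 / (integral\<^sup>L M (\<lambda>\<omega>. (norm (X \<omega> - integral\<^sup>L M X))\<^sup>2))\<^sup>2)
             \<le> (1/2 - 178 * ln (1.4 / \<delta>) / real n) * sqrt (real n / ln (1.4 / \<delta>))"
  shows "measure M {\<omega> \<in> space M. integral\<^sup>L M (\<lambda>\<omega>. (norm (X \<omega> - integral\<^sup>L M X))\<^sup>2) \<le> 2 * That \<omega>} \<ge> 1 - \<delta>"
proof -
  interpret prob_space M by (rule P)
  define \<mu> where "\<mu> = integral\<^sup>L M X"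
  define tr where "tr = integral\<^sup>L M (\<lambda>\<omega>. (norm (X \<omega> - \<mu>))\<^sup>2)"
  define E4 where "E4 = integral\<^sup>L M (\<lambda>\<omega>. (norm (X \<omega> - \<mu>)) ^ 4)"
  define k where "k = n_blocks \<delta>"
  define m where "m = n div k"
  define Vv where "Vv = E4 - tr\<^sup>2"
  have X4: "integrable M (\<lambda>\<omega>. (norm (X \<omega> - \<mu>)) ^ 4)" using X_4 unfolding \<mu>_def .
  have trpos: "tr > 0" using tr_pos unfolding tr_def \<mu>_def .
  have cond': "15.2 * sqrt ((E4 - tr\<^sup>2) / tr\<^sup>2) \<le> (1/2 - 178 * ln (1.4 / \<delta>) / real n) * sqrt (real n / ln (1.4 / \<delta>))"
    using cond unfolding E4_def tr_def \<mu>_def .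
  have k1: "k \<ge> 1" unfolding k_def n_blocks_def by simp
  have m2: "m \<ge> 2"
  proof -
    have "2 * k \<le> n" using k_le unfolding k_def[symmetric] by linarith
    hence "2 * k div k \<le> n div k" by (rule div_le_mono)
    thus ?thesis unfolding m_def using k1 by simp
  qed
  have Gfin: "finite (G j)" and Gne: "G j \<noteq> {}" and Gcard: "card (G j) = m" if "j < k" for j
  proof -
    have "card (G j) = m" using G_card that unfolding k_def m_def by simp
    thus "card (G j) = m" .
    hence "card (G j) > 0" using m2 by simp
    thus "finite (G j)" "G j \<noteq> {}" by (auto simp: card_gt_0_iff)
  qed
  have dt: "integrable M (\<lambda>\<omega>. f (Xs i \<omega>)) \<and> (\<integral>\<omega>. f (Xs i \<omega>) \<partial>M) = (\<integral>\<omega>. f (X \<omega>) \<partial>M)"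
    if i: "i < n" and f: "f \<in> borel_measurable borel" and fi: "integrable M (\<lambda>\<omega>. f (X \<omega>))"
    for i and f :: "'h \<Rightarrow> real"
  proof
    have "integrable M (\<lambda>\<omega>. f (Xs i \<omega>)) \<longleftrightarrow> integrable (distr M borel (Xs i)) f"
      using integrable_distr_eq[OF Xs_meas[OF i] f] by simp
    also have "\<dots> \<longleftrightarrow> integrable (distr M borel X) f" using Xs_distr[OF i] by simp
    also have "\<dots> \<longleftrightarrow> integrable M (\<lambda>\<omega>. f (X \<omega>))" using integrable_distr_eq[OF X_meas f] by simp
    finally show "integrable M (\<lambda>\<omega>. f (Xs i \<omega>))" using fi by simp
    have "(\<integral>\<omega>. f (Xs i \<omega>) \<partial>M) = integral\<^sup>L (distr M borel (Xs i)) f"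
      using integral_distr[OF Xs_meas[OF i] f] by simp
    also have "\<dots> = integral\<^sup>L (distr M borel X) f" using Xs_distr[OF i] by simp
    also have "\<dots> = (\<integral>\<omega>. f (X \<omega>) \<partial>M)" using integral_distr[OF X_meas f] by simp
    finally show "(\<integral>\<omega>. f (Xs i \<omega>) \<partial>M) = (\<integral>\<omega>. f (X \<omega>) \<partial>M)" .
  qed
  have X2: "integrable M (\<lambda>\<omega>. (norm (X \<omega> - \<mu>))\<^sup>2)"
  proof (rule Bochner_Integration.integrable_bound)
    show "integrable M (\<lambda>\<omega>. 1 + (norm (X \<omega> - \<mu>)) ^ 4)" using X4 by simp
    show "(\<lambda>\<omega>. (norm (X \<omega> - \<mu>))\<^sup>2) \<in> borel_measurable M" using X_meas by measurable
    show "AE \<omega> in M. norm ((norm (X \<omega> - \<mu>))\<^sup>2) \<le> norm (1 + (norm (X \<omega> - \<mu>)) ^ 4)"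
    proof (intro AE_I2)
      fix \<omega>
      define a where "a = norm (X \<omega> - \<mu>)"
      have "0 \<le> (a\<^sup>2 - 1/2)\<^sup>2" by simp
      moreover have "(a\<^sup>2 - 1/2)\<^sup>2 = a^4 - a\<^sup>2 + 1/4" by (simp add: power2_eq_square power4_eq_xxxx algebra_simps)
      ultimately have "a\<^sup>2 \<le> 1 + a^4" by linarith
      thus "norm ((norm (X \<omega> - \<mu>))\<^sup>2) \<le> norm (1 + (norm (X \<omega> - \<mu>)) ^ 4)"
        unfolding a_def[symmetric] by simp
    qed
  qed
  define Zf where "Zf x = (norm (x - \<mu>))\<^sup>2 - tr" for x
  have Zf_meas: "Zf \<in> borel_measurable borel" unfolding Zf_def by measurable
  have Zsq_eq: "(\<lambda>\<omega>. Zf (X \<omega>) * Zf (X \<omega>)) = (\<lambda>\<omega>. (norm (X \<omega> - \<mu>)) ^ 4 - 2 * tr * (norm (X \<omega> - \<mu>))\<^sup>2 + tr\<^sup>2)"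
    unfolding Zf_def by (auto simp: power2_eq_square power4_eq_xxxx algebra_simps)
  have XZ2: "integrable M (\<lambda>\<omega>. Zf (X \<omega>) * Zf (X \<omega>))" unfolding Zsq_eq using X4 X2 by auto
  have EZ2: "(\<integral>\<omega>. Zf (X \<omega>) * Zf (X \<omega>) \<partial>M) = Vv"
  proof -
    have "(\<integral>\<omega>. (norm (X \<omega> - \<mu>)) ^ 4 - 2 * tr * (norm (X \<omega> - \<mu>))\<^sup>2 + tr\<^sup>2 \<partial>M)
        = E4 - 2 * tr * tr + tr\<^sup>2"
      using X4 X2 unfolding E4_def tr_def by (simp add: prob_space)
    thus ?thesis unfolding Zsq_eq Vv_def by (simp add: power2_eq_square)
  qed
  have XZ: "integrable M (\<lambda>\<omega>. Zf (X \<omega>))" unfolding Zf_def using X2 by auto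
  have EZ: "(\<integral>\<omega>. Zf (X \<omega>) \<partial>M) = 0" unfolding Zf_def using X2 by (simp add: tr_def prob_space)
  have Vv0: "Vv \<ge> 0" unfolding EZ2[symmetric] by simp
  have XmuI: "integrable M (\<lambda>\<omega>. X \<omega> - \<mu>)" using X_int by auto
  have Xlin: "integrable M (\<lambda>\<omega>. a \<bullet> (X \<omega> - \<mu>)) \<and> (\<integral>\<omega>. a \<bullet> (X \<omega> - \<mu>) \<partial>M) = 0" for a
  proof
    show "integrable M (\<lambda>\<omega>. a \<bullet> (X \<omega> - \<mu>))" using XmuI by auto
    have "(\<integral>\<omega>. a \<bullet> (X \<omega> - \<mu>) \<partial>M) = (\<integral>\<omega>. a \<bullet> X \<omega> - a \<bullet> \<mu> \<partial>M)"
      by (simp add: inner_diff_right)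
    also have "\<dots> = (\<integral>\<omega>. a \<bullet> X \<omega> \<partial>M) - (\<integral>\<omega>. a \<bullet> \<mu> \<partial>M)"
      using X_int by (intro Bochner_Integration.integral_diff) auto
    also have "\<dots> = a \<bullet> \<mu> - a \<bullet> \<mu>" using X_int unfolding \<mu>_def by (simp add: prob_space)
    finally show "(\<integral>\<omega>. a \<bullet> (X \<omega> - \<mu>) \<partial>M) = 0" by simp
  qed
  have ind2: "indep_var borel (Xs i) borel (Xs l)" if "i < n" "l < n" "i \<noteq> l" for i l
  proof -
    have "indep_var (PiM {i} (\<lambda>_. borel)) (\<lambda>\<omega>. restrict (\<lambda>i. Xs i \<omega>) {i}) (PiM {l} (\<lambda>_. borel)) (\<lambda>\<omega>. restrict (\<lambda>i. Xs i \<omega>) {l})"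
      using that by (intro indep_var_restrict[OF Xs_indep]) auto
    hence "indep_var borel ((\<lambda>x. x i) \<circ> (\<lambda>\<omega>. restrict (\<lambda>i. Xs i \<omega>) {i})) borel ((\<lambda>x. x l) \<circ> (\<lambda>\<omega>. restrict (\<lambda>i. Xs i \<omega>) {l}))"
      by (rule indep_var_compose) (auto intro!: measurable_component_singleton)
    moreover have "(\<lambda>x. x i) \<circ> (\<lambda>\<omega>. restrict (\<lambda>i. Xs i \<omega>) {i}) = Xs i" by (auto simp: fun_eq_iff)
    moreover have "(\<lambda>x. x l) \<circ> (\<lambda>\<omega>. restrict (\<lambda>i. Xs i \<omega>) {l}) = Xs l" by (auto simp: fun_eq_iff)
    ultimately show ?thesis by simp
  qed
  have iZ: "integrable M (\<lambda>\<omega>. Zf (Xs i \<omega>)) \<and> (\<integral>\<omega>. Zf (Xs i \<omega>) \<partial>M) = 0" if "i < n" for i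
    using dt[OF that Zf_meas XZ] EZ by simp
  have iZ2: "integrable M (\<lambda>\<omega>. Zf (Xs i \<omega>) * Zf (Xs i \<omega>)) \<and> (\<integral>\<omega>. Zf (Xs i \<omega>) * Zf (Xs i \<omega>) \<partial>M) = Vv" if "i < n" for i
    using dt[OF that _ XZ2] EZ2 Zf_meas by simp
  have iN2: "integrable M (\<lambda>\<omega>. (norm (Xs i \<omega> - \<mu>))\<^sup>2) \<and> (\<integral>\<omega>. (norm (Xs i \<omega> - \<mu>))\<^sup>2 \<partial>M) = tr" if "i < n" for i
    using dt[OF that _ X2] unfolding tr_def by simp
  have iL: "(\<integral>\<omega>. a \<bullet> (Xs i \<omega> - \<mu>) \<partial>M) = 0" if "i < n" for i a
    using dt[OF that _ conjunct1[OF Xlin[of a]]] Xlin[of a] by simp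
  have h1: "integrable M (\<lambda>\<omega>. ((norm (Xs i \<omega> - \<mu>))\<^sup>2 - tr) * ((norm (Xs l \<omega> - \<mu>))\<^sup>2 - tr)) \<and>
      (\<integral>\<omega>. ((norm (Xs i \<omega> - \<mu>))\<^sup>2 - tr) * ((norm (Xs l \<omega> - \<mu>))\<^sup>2 - tr) \<partial>M) = (if i = l then Vv else 0)"
    if "i < n" "l < n" for i l
  proof (cases "i = l")
    case True thus ?thesis using iZ2[OF that(1)] unfolding Zf_def by simp
  next
    case False
    have ind: "indep_var borel (Zf \<circ> Xs i) borel (Zf \<circ> Xs l)"
      by (rule indep_var_compose[OF ind2[OF that False] Zf_meas Zf_meas])
    have "integrable M (\<lambda>\<omega>. (Zf \<circ> Xs i) \<omega> * (Zf \<circ> Xs l) \<omega>)"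
      using ind iZ that by (intro indep_var_integrable) (auto simp: comp_def)
    moreover have "(\<integral>\<omega>. (Zf \<circ> Xs i) \<omega> * (Zf \<circ> Xs l) \<omega> \<partial>M) = 0"
      using ind iZ that by (subst indep_var_lebesgue_integral) (auto simp: comp_def)
    ultimately show ?thesis using False unfolding Zf_def comp_def by simp
  qed
  have h2: "integrable M (\<lambda>\<omega>. (Xs i \<omega> - \<mu>) \<bullet> (Xs l \<omega> - \<mu>)) \<and>
      (\<integral>\<omega>. (Xs i \<omega> - \<mu>) \<bullet> (Xs l \<omega> - \<mu>) \<partial>M) = (if i = l then tr else 0)"
    if "i < n" "l < n" for i l
  proof (cases "i = l")
    case True thus ?thesis using iN2[OF that(1)] by (simp add: power2_norm_eq_inner)
  next
    case False
    have iUV: "integrable M (\<lambda>\<omega>. (Xs i \<omega> - \<mu>) \<bullet> (Xs l \<omega> - \<mu>))"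
    proof (rule Bochner_Integration.integrable_bound)
      show "integrable M (\<lambda>\<omega>. (norm (Xs i \<omega> - \<mu>))\<^sup>2 + (norm (Xs l \<omega> - \<mu>))\<^sup>2)"
        using iN2 that by auto
      show "(\<lambda>\<omega>. (Xs i \<omega> - \<mu>) \<bullet> (Xs l \<omega> - \<mu>)) \<in> borel_measurable M"
        using Xs_meas[OF that(1)] Xs_meas[OF that(2)] by measurable
      show "AE \<omega> in M. norm ((Xs i \<omega> - \<mu>) \<bullet> (Xs l \<omega> - \<mu>)) \<le> norm ((norm (Xs i \<omega> - \<mu>))\<^sup>2 + (norm (Xs l \<omega> - \<mu>))\<^sup>2)"
      proof (intro AE_I2)
        fix \<omega>
        define a where "a = Xs i \<omega> - \<mu>"
        define b where "b = Xs l \<omega> - \<mu>"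
        have "\<bar>a \<bullet> b\<bar> \<le> norm a * norm b" by (rule Cauchy_Schwarz_ineq2)
        also have "\<dots> \<le> (norm a)\<^sup>2 + (norm b)\<^sup>2"
        proof -
          have "0 \<le> (norm a - norm b)\<^sup>2" by simp
          hence "2 * (norm a * norm b) \<le> (norm a)\<^sup>2 + (norm b)\<^sup>2" by (simp add: power2_eq_square algebra_simps)
          moreover have "0 \<le> norm a * norm b" by simp
          ultimately show ?thesis by linarith
        qed
        finally show "norm (a \<bullet> b) \<le> norm ((norm a)\<^sup>2 + (norm b)\<^sup>2)" by simp
      qed
    qed
    have "(\<integral>\<omega>. (Xs i \<omega> - \<mu>) \<bullet> (Xs l \<omega> - \<mu>) \<partial>M) = 0"
      by (rule indep_inner_zero[OF ind2[OF that False] iUV iL[OF that(2)]])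
    thus ?thesis using iUV False by simp
  qed
  define p where "p = Vv / (real m * (3/10)\<^sup>2 * tr\<^sup>2) + 1 / ((1/2 - 3/10) * real m)"
  define F where "F j = (\<lambda>\<omega>. grp_T Xs (G j) \<omega>) -` {..<tr/2} \<inter> space M" for j
  have pF: "prob (F j) \<le> p" if j: "j < k" for j
  proof -
    have GS: "G j \<subseteq> {0..<n}" using G_sub j unfolding k_def by simp
    have GSn: "\<And>i. i \<in> G j \<Longrightarrow> i < n" using GS by auto
    have "prob {\<omega> \<in> space M. grp_T Xs (G j) \<omega> < tr/2} \<le> Vv / (real (card (G j)) * (3/10)\<^sup>2 * tr\<^sup>2) + 1 / ((1/2 - 3/10) * real (card (G j)))"
    proof (rule group_bound[OF Gfin[OF j] Gne[OF j]])
      show "\<And>i. i \<in> G j \<Longrightarrow> Xs i \<in> borel_measurable M" using GS Xs_meas by auto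
      show "\<And>i l. i \<in> G j \<Longrightarrow> l \<in> G j \<Longrightarrow> integrable M (\<lambda>\<omega>. ((norm (Xs i \<omega> - \<mu>))\<^sup>2 - tr) * ((norm (Xs l \<omega> - \<mu>))\<^sup>2 - tr))"
        using h1 by (blast dest: GSn)
      show "\<And>i l. i \<in> G j \<Longrightarrow> l \<in> G j \<Longrightarrow> (\<integral>\<omega>. ((norm (Xs i \<omega> - \<mu>))\<^sup>2 - tr) * ((norm (Xs l \<omega> - \<mu>))\<^sup>2 - tr) \<partial>M) = (if i = l then Vv else 0)"
        using h1 by (blast dest: GSn)
      show "\<And>i l. i \<in> G j \<Longrightarrow> l \<in> G j \<Longrightarrow> integrable M (\<lambda>\<omega>. (Xs i \<omega> - \<mu>) \<bullet> (Xs l \<omega> - \<mu>))"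
        using h2 by (blast dest: GSn)
      show "\<And>i l. i \<in> G j \<Longrightarrow> l \<in> G j \<Longrightarrow> (\<integral>\<omega>. (Xs i \<omega> - \<mu>) \<bullet> (Xs l \<omega> - \<mu>) \<partial>M) = (if i = l then tr else 0)"
        using h2 by (blast dest: GSn)
    qed (use trpos in auto)
    moreover have "{\<omega> \<in> space M. grp_T Xs (G j) \<omega> < tr/2} = F j" unfolding F_def by auto
    ultimately show ?thesis unfolding p_def Gcard[OF j] by simp
  qed
  have p18: "p \<le> 1/8"
  proof -
    have \<kappa>0: "0 \<le> (E4 - tr\<^sup>2) / tr\<^sup>2" using Vv0 unfolding Vv_def by simp
    have "(Vv / tr\<^sup>2) / (9/100 * real (n div n_blocks \<delta>)) + 5 / real (n div n_blocks \<delta>) \<le> 1/8"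
      unfolding Vv_def by (rule num_bound[OF \<delta>_pos \<delta>_lt1 \<kappa>0 k_le cond'])
    moreover have "p = (Vv / tr\<^sup>2) / (9/100 * real (n div n_blocks \<delta>)) + 5 / real (n div n_blocks \<delta>)"
      unfolding p_def m_def k_def using trpos by (simp add: power2_eq_square field_simps)
    ultimately show ?thesis by simp
  qed
  have p0: "p \<ge> 0" unfolding p_def using Vv0 trpos m2 by simp
  define hT where "hT j x = grp_T (\<lambda>i (u::unit). x i) (G j) ()" for j and x :: "nat \<Rightarrow> 'h"
  have indT: "indep_vars (\<lambda>_. borel) (\<lambda>j \<omega>. grp_T Xs (G j) \<omega>) {..<k}"
  proof -
    have "indep_vars (\<lambda>j. PiM (G j) (\<lambda>_. borel)) (\<lambda>j \<omega>. restrict (\<lambda>i. Xs i \<omega>) (G j)) {..<k}"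
      using G_sub G_disj unfolding k_def[symmetric]
      by (intro indep_vars_restrict[OF Xs_indep]) (auto simp: disjoint_family_on_def)
    hence "indep_vars (\<lambda>_. borel) (\<lambda>j \<omega>. hT j (restrict (\<lambda>i. Xs i \<omega>) (G j))) {..<k}"
    proof (rule indep_vars_compose2)
      fix j assume "j \<in> {..<k}"
      show "hT j \<in> borel_measurable (PiM (G j) (\<lambda>_. borel))"
        unfolding hT_def grp_T_def grp_mean_def
        by (intro borel_measurable_times borel_measurable_sum borel_measurable_const
              borel_measurable_power borel_measurable_norm borel_measurable_diff
              borel_measurable_scaleR measurable_component_singleton) auto
    qed
    moreover have "hT j (restrict (\<lambda>i. Xs i \<omega>) (G j)) = grp_T Xs (G j) \<omega>" for j \<omega>
      unfolding hT_def grp_T_def grp_mean_def by simp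
    ultimately show ?thesis by simp
  qed
  have Fsets: "F j \<in> events" if "j < k" for j
  proof -
    have "(\<lambda>\<omega>. grp_T Xs (G j) \<omega>) \<in> borel_measurable M" using indT that unfolding indep_vars_def by auto
    thus ?thesis unfolding F_def by (rule measurable_sets) simp
  qed
  have probInt: "prob (\<Inter>j\<in>S. F j) = (\<Prod>j\<in>S. prob (F j))" if "S \<subseteq> {..<k}" "S \<noteq> {}" for S
  proof -
    have "finite S" using that finite_subset by blast
    thus ?thesis unfolding F_def using indep_varsD[OF indT, of S "\<lambda>_. {..<tr/2}"] that by auto
  qed
  define ss where "ss = (k + 1) div 2"
  define SS where "SS = {S. S \<subseteq> {..<k} \<and> card S = ss}"
  have s1: "ss \<ge> 1" unfolding ss_def using k1 by simp
  have ks: "k \<le> 2 * ss" unfolding ss_def by simp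
  have SSfin: "finite SS" unfolding SS_def by (rule finite_subset[of _ "Pow {..<k}"]) auto
  have fail_sub: "{\<omega> \<in> space M. \<not> tr \<le> 2 * That \<omega>} \<subseteq> (\<Union>S\<in>SS. \<Inter>j\<in>S. F j)"
  proof
    fix \<omega> assume "\<omega> \<in> {\<omega> \<in> space M. \<not> tr \<le> 2 * That \<omega>}"
    hence \<omega>: "\<omega> \<in> space M" and lt: "2 * That \<omega> < tr" by auto
    have "k \<le> 2 * card {j. j < k \<and> grp_T Xs (G j) \<omega> \<le> That \<omega>}"
      by (rule median_count) (use That_median[OF \<omega>] in \<open>simp add: k_def\<close>)
    hence "ss \<le> card {j. j < k \<and> grp_T Xs (G j) \<omega> \<le> That \<omega>}" unfolding ss_def by simp
    then obtain S where S: "S \<subseteq> {j. j < k \<and> grp_T Xs (G j) \<omega> \<le> That \<omega>}" "card S = ss"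
      by (meson obtain_subset_with_card_n)
    have "S \<in> SS" using S unfolding SS_def by auto
    moreover have "\<omega> \<in> (\<Inter>j\<in>S. F j)" using S \<omega> lt unfolding F_def by auto
    ultimately show "\<omega> \<in> (\<Union>S\<in>SS. \<Inter>j\<in>S. F j)" by blast
  qed
  have SSne: "S \<noteq> {}" "S \<subseteq> {..<k}" if "S \<in> SS" for S
    using that s1 unfolding SS_def by auto
  have Isets: "(\<Inter>j\<in>S. F j) \<in> events" if "S \<in> SS" for S
  proof -
    have "finite S" using SSne[OF that] finite_subset by blast
    thus ?thesis using SSne[OF that] Fsets by (intro sets.finite_INT) auto
  qed
  have failset: "{\<omega> \<in> space M. \<not> tr \<le> 2 * That \<omega>} \<in> events" using That_meas by measurable
  have "prob {\<omega> \<in> space M. \<not> tr \<le> 2 * That \<omega>} \<le> prob (\<Union>S\<in>SS. \<Inter>j\<in>S. F j)"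
    using fail_sub Isets SSfin by (intro finite_measure_mono) auto
  also have "\<dots> \<le> (\<Sum>S\<in>SS. prob (\<Inter>j\<in>S. F j))"
    using SSfin Isets by (intro finite_measure_subadditive_finite) auto
  also have "\<dots> \<le> (\<Sum>S\<in>SS. p ^ ss)"
  proof (rule sum_mono)
    fix S assume S: "S \<in> SS"
    have "prob (\<Inter>j\<in>S. F j) = (\<Prod>j\<in>S. prob (F j))" using probInt SSne[OF S] by simp
    also have "\<dots> \<le> (\<Prod>j\<in>S. p)" using SSne[OF S] pF by (intro prod_mono) auto
    also have "\<dots> = p ^ ss" using S unfolding SS_def by simp
    finally show "prob (\<Inter>j\<in>S. F j) \<le> p ^ ss" .
  qed
  also have "\<dots> = real (k choose ss) * p ^ ss"
    unfolding SS_def using n_subsets[of "{..<k}" ss] by simp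
  also have "\<dots> \<le> 2 ^ k * p ^ ss"
  proof -
    have "real (k choose ss) \<le> 2 ^ k" using binomial_le_pow2[of k ss] by (metis of_nat_le_iff of_nat_numeral of_nat_power)
    thus ?thesis using p0 by (intro mult_right_mono) auto
  qed
  also have "\<dots> \<le> \<delta>"
  proof (rule final_num[OF p0 p18 ks \<delta>_pos \<delta>_lt1])
    define \<psi> where "\<psi> = psi (7/18) (1/10)"
    have \<psi>pos: "\<psi> > 0" using psi_bounds(3) unfolding \<psi>_def by linarith
    have lnd: "ln (1/\<delta>) \<ge> 0" using \<delta>_pos \<delta>_lt1 by simp
    have "ln (1/\<delta>) / \<psi> < real k" unfolding k_def n_blocks_def \<psi>_def[symmetric]
      using lnd \<psi>pos by (simp add: of_nat_nat) linarith
    thus "ln (1/\<delta>) < real k * \<psi>" using \<psi>pos by (simp add: field_simps)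
    show "2 * \<psi> \<le> ln 2" using psi_bounds(2) unfolding \<psi>_def .
  qed
  finally have fail: "prob {\<omega> \<in> space M. \<not> tr \<le> 2 * That \<omega>} \<le> \<delta>" .
  have "{\<omega> \<in> space M. tr \<le> 2 * That \<omega>} = space M - {\<omega> \<in> space M. \<not> tr \<le> 2 * That \<omega>}" by auto
  hence "prob {\<omega> \<in> space M. tr \<le> 2 * That \<omega>} = 1 - prob {\<omega> \<in> space M. \<not> tr \<le> 2 * That \<omega>}"
    using prob_compl[OF failset] by simp
  hence "prob {\<omega> \<in> space M. tr \<le> 2 * That \<omega>} \<ge> 1 - \<delta>" using fail by simp
  thus ?thesis unfolding tr_def \<mu>_def .
qed

end
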